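(* Let $\|\cdot\|$ be a norm on $\mathbb{R}^d$ and let $\mathcal{X}\subseteq\mathbb{R}^d$ be closed and convex. Let $S,S_1,\dots,S_n$ be i.i.d. random variables with sample space $\mathcal{S}$, let $f:\mathcal{X}\times\mathcal{S}\to\mathbb{R}$ be convex in its first argument, write $f_i(x)=f(x;S_i)$, $F(x)=\mathbb{E}[f(x;S)]$ and $\bar F(x)=\frac1n\sum_{i=1}^n f_i(x)$. Suppose that $f$ is $L$-Lipschitz and $F$ is $\mu$-strongly convex (with $\mu>0$), and let $F^\star=\min_{x\in\mathcal{X}}F(x)$. Let $x_0,x_1,\dots,x_K\in\mathcal{X}$ be fixed candidate points (not depending on $S_1,\dots,S_n$) and let $k_{\mathrm{greedy}}\in\arg\min_{k\in\{0,1,\dots,K\}}\bar F(x_k)$. Then for all $\delta\in(0,1)$, with probability at least $1-\delta$, \[ F(x_{k_{\mathrm{greedy}}})-F^\star\le 2\max\left\{\min_{k\in\{0,\dots,K\}}F(x_k)-F^\star,\ \frac{32L^2}{\mu n}\ln\frac{2K}{\delta}\right\}. \]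
   Context: $f$ is $L$-Lipschitz means that almost surely $|f(x;S)-f(x';S)|\le L\|x-x'\|$ for all $x,x'\in\mathcal{X}$. $F$ is $\mu$-strongly convex (w.r.t. $\|\cdot\|$) means $F(u)\ge F(v)+g\cdot(u-v)+\frac{\mu}{2}\|u-v\|^2$ for all $u,v\in\mathcal{X}$ and subgradients $g$ of $F$ at $v$. The candidate points are a finite set of models among which one is selected using the validation samples $f_1,\dots,f_n$. *)

theory Defs
  imports "HOL-Probability.Probability"
begin

definition is_norm :: "('a::real_vector \<Rightarrow> real) \<Rightarrow> bool" where
  "is_norm N \<longleftrightarrow> (\<forall>x. 0 \<le> N x) \<and> (\<forall>x. N x = 0 \<longleftrightarrow> x = 0)
     \<and> (\<forall>x y. N (x + y) \<le> N x + N y) \<and> (\<forall>c x. N (c *\<^sub>R x) = \<bar>c\<bar> * N x)"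

definition subgradient_on :: "('a::real_inner \<Rightarrow> real) \<Rightarrow> 'a set \<Rightarrow> 'a \<Rightarrow> 'a \<Rightarrow> bool" where
  "subgradient_on F X v g \<longleftrightarrow> (\<forall>u\<in>X. F u \<ge> F v + g \<bullet> (u - v))"

definition strongly_convex_wrt ::
  "('a::real_inner \<Rightarrow> real) \<Rightarrow> real \<Rightarrow> ('a \<Rightarrow> real) \<Rightarrow> 'a set \<Rightarrow> bool" where
  "strongly_convex_wrt N \<mu> F X \<longleftrightarrow>
     (\<forall>u\<in>X. \<forall>v\<in>X. \<forall>g. subgradient_on F X v g \<longrightarrow>
        F u \<ge> F v + g \<bullet> (u - v) + \<mu> / 2 * (N (u - v))\<^sup>2)"

end

theory Submission
  imports Defs
begin


lemma norm_props:
  assumes "is_norm nrm"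
  shows "nrm 0 = 0" "\<And>x. nrm x \<ge> 0" "\<And>x y. nrm (x + y) \<le> nrm x + nrm y"
    "\<And>c x. nrm (c *\<^sub>R x) = \<bar>c\<bar> * nrm x" "\<And>x. nrm (- x) = nrm x"
    "\<And>x y. nrm (x - y) = nrm (y - x)"
proof -
  show "\<And>c x. nrm (c *\<^sub>R x) = \<bar>c\<bar> * nrm x" using assms by (simp add: is_norm_def)
  then have *: "\<And>x. nrm (- x) = nrm x" by (metis abs_minus_cancel abs_one mult_1 scaleR_minus1_left)
  show "\<And>x. nrm (- x) = nrm x" by fact
  show "\<And>x y. nrm (x - y) = nrm (y - x)" by (metis * minus_diff_eq)
qed (use assms in \<open>auto simp: is_norm_def\<close>)

lemma subgrad_exists:
  fixes F :: "'a::euclidean_space \<Rightarrow> real"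
  assumes nrm: "is_norm nrm" and cvx: "convex_on X F"
    and lip: "\<And>x y. x \<in> X \<Longrightarrow> y \<in> X \<Longrightarrow> F x - F y \<le> L * nrm (x - y)"
    and L: "L \<ge> 0" and v: "v \<in> X"
  shows "\<exists>g. subgradient_on F X v g \<and> (\<forall>w. g \<bullet> w \<le> L * nrm w)"
proof -
  note np = norm_props[OF nrm]
  have X: "convex X" using cvx convex_on_imp_convex by blast
  define A where "A = {(y, t) | y t. \<exists>x\<in>X. t > F x + L * nrm (y - x)}"
  have cA: "convex A"
  proof (rule convexI)
    fix z1 z2 :: "'a \<times> real" and u w :: real
    assume z1: "z1 \<in> A" and z2: "z2 \<in> A" and "0 \<le> u" "0 \<le> w" "u + w = 1"
    then have uw: "0 \<le> u \<and> 0 \<le> w \<and> u + w = 1" by simp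
    obtain y1 t1 x1 where e1: "z1 = (y1, t1)" "x1 \<in> X" "t1 > F x1 + L * nrm (y1 - x1)"
      using z1 unfolding A_def by blast
    obtain y2 t2 x2 where e2: "z2 = (y2, t2)" "x2 \<in> X" "t2 > F x2 + L * nrm (y2 - x2)"
      using z2 unfolding A_def by blast
    define x where "x = u *\<^sub>R x1 + w *\<^sub>R x2"
    have xX: "x \<in> X" using X e1 e2 uw unfolding x_def by (simp add: convexD)
    have Fx: "F x \<le> u * F x1 + w * F x2"
    proof -
      have "u = 1 - w" using uw by simp
      moreover have "F ((1 - w) *\<^sub>R x1 + w *\<^sub>R x2) \<le> (1 - w) * F x1 + w * F x2"
        by (rule convex_onD[OF cvx]) (use uw e1 e2 in auto)
      ultimately show ?thesis unfolding x_def by simp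
    qed
    have "nrm ((u *\<^sub>R y1 + w *\<^sub>R y2) - x) = nrm (u *\<^sub>R (y1 - x1) + w *\<^sub>R (y2 - x2))"
      unfolding x_def by (simp add: algebra_simps)
    also have "\<dots> \<le> u * nrm (y1 - x1) + w * nrm (y2 - x2)"
      using np(3,4) uw by (metis abs_of_nonneg)
    finally have Nx: "nrm ((u *\<^sub>R y1 + w *\<^sub>R y2) - x) \<le> u * nrm (y1 - x1) + w * nrm (y2 - x2)" .
    have "u * t1 + w * t2 > u * (F x1 + L * nrm (y1 - x1)) + w * (F x2 + L * nrm (y2 - x2))"
    proof (cases "u = 0")
      case True then show ?thesis using uw e2 by simp
    next
      case False then have "u > 0" using uw by simp
      then have "u * t1 > u * (F x1 + L * nrm (y1 - x1))" using e1 by simp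
      moreover have "w * t2 \<ge> w * (F x2 + L * nrm (y2 - x2))" using e2 uw
        by (intro mult_left_mono) auto
      ultimately show ?thesis by linarith
    qed
    moreover have "u * (F x1 + L * nrm (y1 - x1)) + w * (F x2 + L * nrm (y2 - x2))
        \<ge> F x + L * nrm ((u *\<^sub>R y1 + w *\<^sub>R y2) - x)"
      using Fx mult_left_mono[OF Nx L] by (simp add: algebra_simps)
    ultimately show "u *\<^sub>R z1 + w *\<^sub>R z2 \<in> A"
      unfolding A_def using e1 e2 xX by force
  qed
  define p where "p = (v, F v)"
  have pA: "p \<notin> A"
  proof
    assume "p \<in> A"
    then obtain x where "x \<in> X" "F v > F x + L * nrm (v - x)" unfolding A_def p_def by auto
    with lip[OF v this(1)] show False by linarith
  qed
  have "convex ((\<lambda>z. z - p) ` A)" by (rule convex_translation_subtract[OF cA])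
  moreover have "0 \<notin> (\<lambda>z. z - p) ` A" using pA by auto
  ultimately obtain a where a: "a \<noteq> 0" "\<forall>z\<in>(\<lambda>z. z - p) ` A. 0 \<le> a \<bullet> z"
    using separating_hyperplane_set_0 by blast
  obtain g' b where ab: "a = (g', b)" by fastforce
  have key: "0 \<le> g' \<bullet> (y - v) + b * (t - F v)" if "(y, t) \<in> A" for y t
    using a(2) that ab unfolding p_def by (force simp: inner_Pair)
  have inA: "(y, F v + L * nrm (y - v) + s) \<in> A" if "s > 0" for y s
    unfolding A_def using v that by force
  have b0: "b \<ge> 0"
    using key[OF inA[of 1 v]] by (simp add: np)
  have bpos: "b > 0"
  proof (rule ccontr)
    assume "\<not> b > 0" then have "b = 0" using b0 by simp
    then have "0 \<le> g' \<bullet> ((v - g') - v)" using key[OF inA[of 1 "v - g'"]] by simp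
    then have "g' \<bullet> g' \<le> 0" by (simp add: inner_minus_right)
    then have "g' = 0" using inner_gt_zero_iff[of g'] by linarith
    with \<open>b = 0\<close> ab a(1) show False by (simp add: zero_prod_def)
  qed
  define g where "g = - (1 / b) *\<^sub>R g'"
  have gb: "g \<bullet> z = - (g' \<bullet> z) / b" for z unfolding g_def by simp
  have sub: "subgradient_on F X v g"
    unfolding subgradient_on_def
  proof
    fix u assume u: "u \<in> X"
    have "F v + g \<bullet> (u - v) \<le> F u + s" if "s > 0" for s
    proof -
      have "(u, F u + s) \<in> A" unfolding A_def using u that by (force simp: np)
      from key[OF this] bpos show ?thesis by (simp add: gb field_simps)
    qed
    then show "F v + g \<bullet> (u - v) \<le> F u"
      by (metis field_le_epsilon)
  qed
  have bound: "g \<bullet> w \<le> L * nrm w" for w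
  proof -
    have "g \<bullet> w \<le> L * nrm w + s" if "s > 0" for s
      using key[OF inA[OF that, of "v + w"]] bpos by (simp add: gb field_simps)
    then show ?thesis by (metis field_le_epsilon)
  qed
  show ?thesis using sub bound by blast
qed



lemma hoeff_pair:
  fixes Y :: "nat \<Rightarrow> 'w \<Rightarrow> real"
  assumes P: "prob_space M" and n: "n \<ge> 1"
    and ind: "prob_space.indep_vars M (\<lambda>_. borel) Y {1..n}"
    and bd: "\<And>i. i \<in> {1..n} \<Longrightarrow> AE \<omega> in M. \<bar>Y i \<omega>\<bar> \<le> B"
    and ex: "\<And>i. i \<in> {1..n} \<Longrightarrow> integral\<^sup>L M (Y i) = \<Delta>"
    and D: "\<Delta> > 0" and B: "B > 0"
  shows "measure M {\<omega>\<in>space M. (\<Sum>i=1..n. Y i \<omega>) \<le> 0} \<le> exp (- real n * \<Delta>\<^sup>2 / (2 * B\<^sup>2))"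
proof -
  interpret prob_space M by (rule P)
  interpret H: Hoeffding_ineq M "{1..n}" Y "\<lambda>_. -B" "\<lambda>_. B" "\<Sum>i\<in>{1..n}. expectation (Y i)"
  proof unfold_locales
    show "indep_vars (\<lambda>_. borel) Y {1..n}" by (rule ind)
    fix i assume "i \<in> {1..n}"
    from bd[OF this] show "AE x in M. Y i x \<in> {- B..B}" by (auto elim!: eventually_mono)
  qed simp_all
  have mu: "(\<Sum>i\<in>{1..n}. expectation (Y i)) = real n * \<Delta>" using ex by simp
  have s: "(\<Sum>i\<in>{1..n}. (B - - B)\<^sup>2) = 4 * real n * B\<^sup>2" by (simp add: power2_eq_square)
  have "measure M {\<omega>\<in>space M. (\<Sum>i\<in>{1..n}. Y i \<omega>) \<le> (\<Sum>i\<in>{1..n}. expectation (Y i)) - real n * \<Delta>}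
     \<le> exp (-2 * (real n * \<Delta>)\<^sup>2 / (\<Sum>i\<in>{1..n}. (B - - B)\<^sup>2))"
    by (rule H.Hoeffding_ineq_le) (use D B n in \<open>auto simp: s\<close>)
  also have "-2 * (real n * \<Delta>)\<^sup>2 / (\<Sum>i\<in>{1..n}. (B - - B)\<^sup>2) = - real n * \<Delta>\<^sup>2 / (2 * B\<^sup>2)"
    unfolding s using n B by (simp add: field_simps power2_eq_square)
  finally show ?thesis unfolding mu by simp
qed


theorem proposition1:
  fixes nrm :: "real^'d \<Rightarrow> real"
    and X :: "(real^'d) set"
    and M :: "'w measure" and N :: "'s measure"
    and S :: "nat \<Rightarrow> 'w \<Rightarrow> 's"
    and f :: "real^'d \<Rightarrow> 's \<Rightarrow> real"
    and n K :: nat and L \<mu> \<delta> :: real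
    and xs :: "nat \<Rightarrow> real^'d"
    and F :: "real^'d \<Rightarrow> real" and Fbar :: "'w \<Rightarrow> real^'d \<Rightarrow> real" and Fstar :: real
  assumes norm: "is_norm nrm"
    and X_closed: "closed X" and X_convex: "convex X"
    and M_prob: "prob_space M"
    and S_rv: "\<And>i. i \<in> {0..n} \<Longrightarrow> S i \<in> measurable M N"
    and S_indep: "prob_space.indep_vars M (\<lambda>_. N) S {0..n}"
    and S_ident: "\<And>i. i \<in> {0..n} \<Longrightarrow> distr M N (S i) = distr M N (S 0)"
    and n_pos: "n \<ge> 1"
    and f_meas: "\<And>x. x \<in> X \<Longrightarrow> (\<lambda>s. f x s) \<in> borel_measurable N"
    and f_integrable: "\<And>x. x \<in> X \<Longrightarrow> integrable M (\<lambda>\<omega>. f x (S 0 \<omega>))"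
    and f_convex: "\<And>s. s \<in> space N \<Longrightarrow> convex_on X (\<lambda>x. f x s)"
    and F_def: "F \<equiv> (\<lambda>x. integral\<^sup>L M (\<lambda>\<omega>. f x (S 0 \<omega>)))"
    and Fbar_def: "Fbar \<equiv> (\<lambda>\<omega> x. (\<Sum>i=1..n. f x (S i \<omega>)) / real n)"
    and f_Lipschitz: "AE s in distr M N (S 0). \<forall>x\<in>X. \<forall>x'\<in>X. \<bar>f x s - f x' s\<bar> \<le> L * nrm (x - x')"
    and mu_pos: "\<mu> > 0"
    and F_strongly_convex: "strongly_convex_wrt nrm \<mu> F X"
    and Fstar_def: "Fstar \<equiv> (INF x\<in>X. F x)"
    and Fstar_min: "\<exists>x\<in>X. F x = Fstar"
    and xs_in: "\<And>k. k \<in> {0..K} \<Longrightarrow> xs k \<in> X"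
    and delta: "0 < \<delta>" "\<delta> < 1"
  shows "measure M {\<omega> \<in> space M. \<forall>k\<in>{0..K}.
            (\<forall>j\<in>{0..K}. Fbar \<omega> (xs k) \<le> Fbar \<omega> (xs j)) \<longrightarrow>
            F (xs k) - Fstar \<le> 2 * max ((MIN j\<in>{0..K}. F (xs j)) - Fstar)
                                      (32 * L\<^sup>2 / (\<mu> * real n) * ln (2 * real K / \<delta>))}
         \<ge> 1 - \<delta>"
proof -
  interpret P: prob_space M by (rule M_prob)
  note np = norm_props[OF norm]
  have Srv[measurable]: "S i \<in> measurable M N" if "i \<in> {0..n}" for i using S_rv that .
  have fmeasM: "(\<lambda>\<omega>. f x (S i \<omega>)) \<in> borel_measurable M" if "i \<in> {0..n}" "x \<in> X" for i x
    using measurable_comp[OF S_rv[OF that(1)] f_meas[OF that(2)]] by (simp add: comp_def)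
  have lipM: "AE \<omega> in M. \<bar>f x (S i \<omega>) - f x' (S i \<omega>)\<bar> \<le> L * nrm (x - x')"
    if i: "i \<in> {0..n}" and x: "x \<in> X" and x': "x' \<in> X" for i x x'
  proof -
    have [measurable]: "f x \<in> borel_measurable N" "f x' \<in> borel_measurable N"
      using f_meas[OF x] f_meas[OF x'] by simp_all
    have "AE s in distr M N (S i). \<bar>f x s - f x' s\<bar> \<le> L * nrm (x - x')"
      using f_Lipschitz unfolding S_ident[OF i] using x x' by (auto elim!: eventually_mono)
    moreover have m: "{s \<in> space N. \<bar>f x s - f x' s\<bar> \<le> L * nrm (x - x')} \<in> sets N" by measurable
    ultimately show ?thesis using AE_distr_iff[OF S_rv[OF i] m] by simp
  qed
  have intS: "integrable M (\<lambda>\<omega>. f x (S i \<omega>))" if i: "i \<in> {0..n}" and x: "x \<in> X" for i x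
  proof -
    have "integrable (distr M N (S 0)) (f x)"
      using integrable_distr_eq[OF S_rv f_meas[OF x], of 0] f_integrable[OF x] by simp
    then have "integrable (distr M N (S i)) (f x)" using S_ident[OF i] by simp
    then show ?thesis using integrable_distr_eq[OF S_rv[OF i] f_meas[OF x]] by simp
  qed
  have intF: "integral\<^sup>L M (\<lambda>\<omega>. f x (S i \<omega>)) = F x" if i: "i \<in> {0..n}" and x: "x \<in> X" for i x
  proof -
    have "integral\<^sup>L M (\<lambda>\<omega>. f x (S i \<omega>)) = integral\<^sup>L (distr M N (S i)) (f x)"
      using integral_distr[OF S_rv[OF i] f_meas[OF x]] by simp
    also have "\<dots> = integral\<^sup>L (distr M N (S 0)) (f x)" using S_ident[OF i] by simp
    also have "\<dots> = F x" using integral_distr[OF S_rv f_meas[OF x], of 0] F_def by simp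
    finally show ?thesis .
  qed
  have Flip: "F x - F x' \<le> L * nrm (x - x')" if x: "x \<in> X" and x': "x' \<in> X" for x x'
  proof -
    have "F x - F x' = integral\<^sup>L M (\<lambda>\<omega>. f x (S 0 \<omega>) - f x' (S 0 \<omega>))"
      using intF[of 0 x] intF[of 0 x'] intS[of 0 x] intS[of 0 x'] x x' by simp
    also have "\<dots> \<le> integral\<^sup>L M (\<lambda>\<omega>. L * nrm (x - x'))"
      by (rule integral_mono_AE) (use intS[of 0 x] intS[of 0 x'] x x' lipM[of 0 x x'] in \<open>auto elim!: eventually_mono\<close>)
    also have "\<dots> = L * nrm (x - x')" by (simp add: P.prob_space)
    finally show ?thesis .
  qed
  have Fcvx: "convex_on X F"
  proof (rule convex_onI)
    fix t :: real and x y assume t: "0 < t" "t < 1" and x: "x \<in> X" and y: "y \<in> X"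
    have z: "(1 - t) *\<^sub>R x + t *\<^sub>R y \<in> X" using convexD_alt[OF X_convex x y, of t] t by simp
    have "F ((1 - t) *\<^sub>R x + t *\<^sub>R y) = integral\<^sup>L M (\<lambda>\<omega>. f ((1 - t) *\<^sub>R x + t *\<^sub>R y) (S 0 \<omega>))"
      using intF[OF _ z, of 0] by (simp only: atLeastAtMost_iff zero_le le0 simp_thms)
    also have "\<dots> \<le> integral\<^sup>L M (\<lambda>\<omega>. (1 - t) * f x (S 0 \<omega>) + t * f y (S 0 \<omega>))"
    proof (rule integral_mono)
      fix \<omega> assume "\<omega> \<in> space M"
      then have "S 0 \<omega> \<in> space N" using measurable_space[OF Srv[of 0]] by simp
      then show "f ((1 - t) *\<^sub>R x + t *\<^sub>R y) (S 0 \<omega>) \<le> (1 - t) * f x (S 0 \<omega>) + t * f y (S 0 \<omega>)"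
        using convex_onD[OF f_convex, of "S 0 \<omega>" t x y] t x y by simp
    next
      show "integrable M (\<lambda>\<omega>. f ((1 - t) *\<^sub>R x + t *\<^sub>R y) (S 0 \<omega>))" by (rule intS) (simp_all add: z)
    next
      show "integrable M (\<lambda>\<omega>. (1 - t) * f x (S 0 \<omega>) + t * f y (S 0 \<omega>))"
        by (intro Bochner_Integration.integrable_add Bochner_Integration.integrable_mult_right intS) (simp_all add: x y)
    qed
    also have "\<dots> = (1 - t) * F x + t * F y"
    proof -
      have ix: "integrable M (\<lambda>\<omega>. f x (S 0 \<omega>))" "integrable M (\<lambda>\<omega>. f y (S 0 \<omega>))"
        by (rule intS; simp add: x y)+
      have "integral\<^sup>L M (\<lambda>\<omega>. (1 - t) * f x (S 0 \<omega>) + t * f y (S 0 \<omega>))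
          = (1 - t) * integral\<^sup>L M (\<lambda>\<omega>. f x (S 0 \<omega>)) + t * integral\<^sup>L M (\<lambda>\<omega>. f y (S 0 \<omega>))"
        using ix by (simp add: integral_add integrable_mult_right)
      moreover have "integral\<^sup>L M (\<lambda>\<omega>. f x (S 0 \<omega>)) = F x" "integral\<^sup>L M (\<lambda>\<omega>. f y (S 0 \<omega>)) = F y"
        by (rule intF; simp add: x y)+
      ultimately show ?thesis by simp
    qed
    finally show "F ((1 - t) *\<^sub>R x + t *\<^sub>R y) \<le> (1 - t) * F x + t * F y" .
  qed (rule X_convex)
  obtain xstar where xstar: "xstar \<in> X" "F xstar = Fstar" using Fstar_min by blast
  obtain g where g: "subgradient_on F X xstar g" "\<And>w. g \<bullet> w \<le> \<bar>L\<bar> * nrm w"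
  proof -
    have "F x - F x' \<le> \<bar>L\<bar> * nrm (x - x')" if "x \<in> X" "x' \<in> X" for x x'
    proof -
      have "L * nrm (x - x') \<le> \<bar>L\<bar> * nrm (x - x')" by (rule mult_right_mono[OF abs_ge_self np(2)])
      then show ?thesis using Flip[OF that] by linarith
    qed
    from subgrad_exists[OF norm Fcvx this _ xstar(1)] that show ?thesis by auto
  qed
  have bdd: "bdd_below (F ` X)"
  proof (rule bdd_belowI2)
    fix u assume u: "u \<in> X"
    have "F u \<ge> F xstar + g \<bullet> (u - xstar) + \<mu> / 2 * (nrm (u - xstar))\<^sup>2"
      using F_strongly_convex g(1) u xstar(1) unfolding strongly_convex_wrt_def by blast
    moreover have "g \<bullet> (u - xstar) \<ge> - (\<bar>L\<bar> * nrm (u - xstar))"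
      using g(2)[of "xstar - u"] np(6)[of xstar u] by (simp add: inner_diff_right)
    moreover have rr: "- (\<bar>L\<bar> * r) + \<mu> / 2 * r\<^sup>2 \<ge> - (L\<^sup>2 / (2 * \<mu>))" for r
    proof -
      have "0 \<le> (\<mu> * r - \<bar>L\<bar>)\<^sup>2 / (2 * \<mu>)" using mu_pos by simp
      also have "(\<mu> * r - \<bar>L\<bar>)\<^sup>2 / (2 * \<mu>) = - (\<bar>L\<bar> * r) + \<mu> / 2 * r\<^sup>2 + L\<^sup>2 / (2 * \<mu>)"
        using mu_pos by (simp add: field_simps power2_eq_square)
      finally show ?thesis by linarith
    qed
    ultimately show "F u \<ge> F xstar - L\<^sup>2 / (2 * \<mu>)"
      using rr[of "nrm (u - xstar)"] by linarith
  qed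
  have Fge: "Fstar \<le> F u" if "u \<in> X" for u
    unfolding Fstar_def using bdd that by (simp add: cINF_lower)
  have growth: "\<mu> / 2 * (nrm (u - xstar))\<^sup>2 \<le> F u - Fstar" if u: "u \<in> X" for u
  proof -
    have "subgradient_on F X xstar 0" unfolding subgradient_on_def using Fge xstar by simp
    then show ?thesis using F_strongly_convex u xstar unfolding strongly_convex_wrt_def by force
  qed

  have n0: "real n > 0" using n_pos by simp
  have FbarM: "(\<lambda>\<omega>. Fbar \<omega> x) \<in> borel_measurable M" if "x \<in> X" for x
    unfolding Fbar_def
    by (intro borel_measurable_divide borel_measurable_const borel_measurable_sum fmeasM) (use that in auto)
  have finK: "finite ((\<lambda>j. F (xs j)) ` {0..K})" "(\<lambda>j. F (xs j)) ` {0..K} \<noteq> {}" by auto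
  obtain ks where ks: "ks \<in> {0..K}" "F (xs ks) = (MIN j\<in>{0..K}. F (xs j))"
    using Min_in[OF finK] by (metis (no_types, lifting) imageE)
  define ds where "ds = F (xs ks) - Fstar"
  define ell where "ell = ln (2 * real K / \<delta>)"
  define c where "c = 32 * L\<^sup>2 / (\<mu> * real n) * ell"
  define T where "T = 2 * max ds c"
  define B where "B = {k\<in>{0..K}. F (xs k) - Fstar > T}"
  define E where "E k = {\<omega>\<in>space M. Fbar \<omega> (xs k) \<le> Fbar \<omega> (xs ks)}" for k
  have ksX: "xs ks \<in> X" using xs_in ks(1) by auto
  have ds0: "0 \<le> ds" using Fge[OF ksX] ds_def by simp
  have ksB: "ks \<notin> B"
  proof
    assume "ks \<in> B"
    then have "F (xs ks) - Fstar > T" unfolding B_def by simp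
    then have "ds > 2 * max ds c" unfolding ds_def T_def .
    moreover have "ds \<le> max ds c" by simp
    ultimately show False using ds0 by linarith
  qed
  have EM: "E k \<in> sets M" if "k \<in> {0..K}" for k
  proof -
    have [measurable]: "(\<lambda>\<omega>. Fbar \<omega> (xs k)) \<in> borel_measurable M" "(\<lambda>\<omega>. Fbar \<omega> (xs ks)) \<in> borel_measurable M"
      using FbarM xs_in that ks(1) by auto
    show ?thesis unfolding E_def by measurable
  qed
  have Ebound: "measure M (E k) \<le> \<delta> / (2 * real K)" if kB: "k \<in> B" for k
  proof -
    have k: "k \<in> {0..K}" and ak: "F (xs k) - Fstar > T" using kB B_def by auto
    have kX: "xs k \<in> X" using xs_in k by auto
    define a where "a = F (xs k) - Fstar"
    define \<Delta> where "\<Delta> = F (xs k) - F (xs ks)"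
    define D where "D = nrm (xs k - xs ks)"
    define Bd where "Bd = L * D"
    have a2ds: "a > 2 * ds" and a2c: "a > 2 * c" using ak T_def a_def by auto
    have apos: "a > 0" using a2ds ds0 by linarith
    have \<Delta>a: "\<Delta> \<ge> a / 2" using a2ds unfolding \<Delta>_def a_def ds_def by (simp add: field_simps)
    have \<Delta>pos: "\<Delta> > 0" using \<Delta>a apos by linarith
    have \<Delta>B: "\<Delta> \<le> Bd" using Flip[OF kX ksX] unfolding \<Delta>_def Bd_def D_def by simp
    have Bpos: "Bd > 0" using \<Delta>B \<Delta>pos by linarith
    have kne: "k \<noteq> ks" using ksB kB by auto
    have K1: "K \<ge> 1" using k ks(1) kne by auto
    define Y where "Y i \<omega> = f (xs k) (S i \<omega>) - f (xs ks) (S i \<omega>)" for i \<omega>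
    have ind: "prob_space.indep_vars M (\<lambda>_. borel) Y {1..n}"
    proof -
      have "P.indep_vars (\<lambda>_. N) S {1..n}" using P.indep_vars_subset[OF S_indep] by auto
      then have "P.indep_vars (\<lambda>_. borel) (\<lambda>i \<omega>. (\<lambda>s. f (xs k) s - f (xs ks) s) (S i \<omega>)) {1..n}"
        by (rule P.indep_vars_compose2) (auto intro!: borel_measurable_diff f_meas kX ksX)
      then show ?thesis unfolding Y_def by simp
    qed
    have bd: "AE \<omega> in M. \<bar>Y i \<omega>\<bar> \<le> Bd" if "i \<in> {1..n}" for i
      using lipM[of i "xs k" "xs ks"] that kX ksX unfolding Y_def Bd_def D_def by simp
    have ex: "integral\<^sup>L M (Y i) = \<Delta>" if "i \<in> {1..n}" for i
    proof -
      have i: "i \<in> {0..n}" using that by auto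
      have "integral\<^sup>L M (Y i) = integral\<^sup>L M (\<lambda>\<omega>. f (xs k) (S i \<omega>)) - integral\<^sup>L M (\<lambda>\<omega>. f (xs ks) (S i \<omega>))"
        unfolding Y_def by (rule Bochner_Integration.integral_diff[OF intS[OF i kX] intS[OF i ksX]])
      then show ?thesis using intF[OF i kX] intF[OF i ksX] \<Delta>_def by simp
    qed
    have H: "measure M {\<omega>\<in>space M. (\<Sum>i=1..n. Y i \<omega>) \<le> 0} \<le> exp (- real n * \<Delta>\<^sup>2 / (2 * Bd\<^sup>2))"
      by (rule hoeff_pair[OF M_prob n_pos ind bd ex \<Delta>pos Bpos])
    have Eeq: "E k = {\<omega>\<in>space M. (\<Sum>i=1..n. Y i \<omega>) \<le> 0}"
      unfolding E_def Y_def Fbar_def using n0 by (auto simp: sum_subtractf divide_le_cancel)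
    define r1 where "r1 = nrm (xs k - xstar)"
    define r2 where "r2 = nrm (xs ks - xstar)"
    have g1: "\<mu> / 2 * r1\<^sup>2 \<le> a" using growth[OF kX] unfolding r1_def a_def .
    have g2: "\<mu> / 2 * r2\<^sup>2 \<le> ds" using growth[OF ksX] unfolding r2_def ds_def .
    have D0: "0 \<le> D" unfolding D_def by (rule np(2))
    have Dr: "D \<le> r1 + r2"
    proof -
      have "D = nrm ((xs k - xstar) + (xstar - xs ks))" unfolding D_def by simp
      also have "\<dots> \<le> r1 + nrm (xstar - xs ks)" unfolding r1_def by (rule np(3))
      finally show ?thesis unfolding r2_def using np(6)[of xstar "xs ks"] by simp
    qed
    have "D\<^sup>2 \<le> (r1 + r2)\<^sup>2" by (rule power_mono[OF Dr D0])
    also have "\<dots> \<le> 2 * r1\<^sup>2 + 2 * r2\<^sup>2"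
    proof -
      have "0 \<le> (r1 - r2)\<^sup>2" by simp
      then show ?thesis by (simp add: power2_eq_square algebra_simps)
    qed
    finally have "\<mu> * D\<^sup>2 \<le> \<mu> * (2 * r1\<^sup>2 + 2 * r2\<^sup>2)" using mu_pos by simp
    also have "\<dots> \<le> 4 * a + 4 * ds" using g1 g2 by (simp add: algebra_simps)
    also have "\<dots> \<le> 6 * a" using a2ds by simp
    finally have muD: "\<mu> * D\<^sup>2 \<le> 6 * a" .
    have ellpos: "ell > 0"
    proof -
      have "2 * real K / \<delta> > 1" using K1 delta by (simp add: field_simps)
      then show ?thesis unfolding ell_def by simp
    qed
    have cc: "2 * c * (\<mu> * real n) = 64 * L\<^sup>2 * ell" unfolding c_def using mu_pos n0 by (simp add: field_simps)
    have "2 * c * (\<mu> * real n) < a * (\<mu> * real n)"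
      by (rule mult_strict_right_mono[OF a2c]) (use mu_pos n0 in simp)
    then have h0: "L\<^sup>2 * ell \<le> a * \<mu> * real n / 64" unfolding cc by simp
    have h1: "\<mu> * (2 * Bd\<^sup>2) \<le> 12 * a * L\<^sup>2"
    proof -
      have "\<mu> * (2 * Bd\<^sup>2) = 2 * L\<^sup>2 * (\<mu> * D\<^sup>2)" unfolding Bd_def by (simp add: power_mult_distrib algebra_simps)
      also have "\<dots> \<le> 2 * L\<^sup>2 * (6 * a)" by (rule mult_left_mono[OF muD]) simp
      finally show ?thesis by simp
    qed
    have "\<mu> * (ell * (2 * Bd\<^sup>2)) = ell * (\<mu> * (2 * Bd\<^sup>2))" by simp
    also have "\<dots> \<le> ell * (12 * a * L\<^sup>2)" by (rule mult_left_mono[OF h1]) (use ellpos in simp)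
    also have "\<dots> = 12 * a * (L\<^sup>2 * ell)" by simp
    also have "\<dots> \<le> 12 * a * (a * \<mu> * real n / 64)" by (rule mult_left_mono[OF h0]) (use apos in simp)
    also have "\<dots> = \<mu> * (3 / 16 * real n * a\<^sup>2)" by (simp add: power2_eq_square)
    finally have h2: "ell * (2 * Bd\<^sup>2) \<le> 3 / 16 * real n * a\<^sup>2" using mu_pos by simp
    have "a\<^sup>2 \<le> (2 * \<Delta>)\<^sup>2" by (rule power_mono) (use \<Delta>a apos in auto)
    then have "3 / 16 * real n * a\<^sup>2 \<le> 3 / 16 * real n * (4 * \<Delta>\<^sup>2)" using n0 by (simp add: power_mult_distrib)
    also have "\<dots> \<le> real n * \<Delta>\<^sup>2" using n0 by simp
    finally have h3: "ell * (2 * Bd\<^sup>2) \<le> real n * \<Delta>\<^sup>2" using h2 by linarith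
    have B2: "2 * Bd\<^sup>2 > 0" using Bpos by simp
    have "ell \<le> real n * \<Delta>\<^sup>2 / (2 * Bd\<^sup>2)" using h3 B2 by (simp add: pos_le_divide_eq)
    then have "- real n * \<Delta>\<^sup>2 / (2 * Bd\<^sup>2) \<le> - ell" by simp
    then have "exp (- real n * \<Delta>\<^sup>2 / (2 * Bd\<^sup>2)) \<le> exp (- ell)" by simp
    also have "exp (- ell) = \<delta> / (2 * real K)"
    proof -
      have "2 * real K / \<delta> > 0" using K1 delta by simp
      then have "exp ell = 2 * real K / \<delta>" unfolding ell_def by simp
      then show ?thesis by (simp add: exp_minus)
    qed
    finally show ?thesis using H Eeq by simp
  qed
  define G where "G = {\<omega> \<in> space M. \<forall>k\<in>{0..K}.
            (\<forall>j\<in>{0..K}. Fbar \<omega> (xs k) \<le> Fbar \<omega> (xs j)) \<longrightarrow>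
            F (xs k) - Fstar \<le> 2 * max ((MIN j\<in>{0..K}. F (xs j)) - Fstar)
                                      (32 * L\<^sup>2 / (\<mu> * real n) * ln (2 * real K / \<delta>))}"
  have Tdef: "2 * max ((MIN j\<in>{0..K}. F (xs j)) - Fstar) (32 * L\<^sup>2 / (\<mu> * real n) * ln (2 * real K / \<delta>)) = T"
    using ks(2) unfolding ds_def c_def ell_def T_def by simp
  have GM: "G \<in> sets M"
    unfolding G_def
  proof (rule sets.sets_Collect_finite_All')
    fix k assume k: "k \<in> {0..K}"
    show "{\<omega> \<in> space M. (\<forall>j\<in>{0..K}. Fbar \<omega> (xs k) \<le> Fbar \<omega> (xs j)) \<longrightarrow>
            F (xs k) - Fstar \<le> 2 * max ((MIN j\<in>{0..K}. F (xs j)) - Fstar)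
                                      (32 * L\<^sup>2 / (\<mu> * real n) * ln (2 * real K / \<delta>))} \<in> sets M"
    proof (rule sets.sets_Collect_imp[OF sets.sets_Collect_const])
      show "{\<omega> \<in> space M. \<forall>j\<in>{0..K}. Fbar \<omega> (xs k) \<le> Fbar \<omega> (xs j)} \<in> sets M"
      proof (rule sets.sets_Collect_finite_All')
        fix j assume j: "j \<in> {0..K}"
        show "{\<omega> \<in> space M. Fbar \<omega> (xs k) \<le> Fbar \<omega> (xs j)} \<in> sets M"
          by (rule borel_measurable_le) (use FbarM xs_in k j in auto)
      qed auto
    qed
  qed auto
  have sub: "space M - (\<Union>k\<in>B. E k) \<subseteq> G"
  proof
    fix \<omega> assume \<omega>: "\<omega> \<in> space M - (\<Union>k\<in>B. E k)"
    have "F (xs k) - Fstar \<le> T" if k: "k \<in> {0..K}" and am: "\<forall>j\<in>{0..K}. Fbar \<omega> (xs k) \<le> Fbar \<omega> (xs j)" for k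
    proof (rule ccontr)
      assume "\<not> F (xs k) - Fstar \<le> T"
      then have "k \<in> B" using k unfolding B_def by auto
      moreover have "\<omega> \<in> E k" using am ks(1) \<omega> unfolding E_def by auto
      ultimately show False using \<omega> by auto
    qed
    then show "\<omega> \<in> G" using \<omega> unfolding G_def Tdef by auto
  qed
  have finB: "finite B" unfolding B_def by simp
  have UM: "(\<Union>k\<in>B. E k) \<in> sets M" using EM finB unfolding B_def by auto
  have sumb: "(\<Sum>k\<in>B. measure M (E k)) \<le> \<delta>"
  proof (cases "B = {}")
    case True then show ?thesis using delta by simp
  next
    case False
    then obtain k0 where k0: "k0 \<in> B" by auto
    then have "k0 \<noteq> ks" "k0 \<le> K" using ksB unfolding B_def by auto
    then have K1: "K \<ge> 1" using ks(1) by auto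
    have "card B \<le> card ({0..K} - {ks})" by (rule card_mono) (use ksB in \<open>auto simp: B_def\<close>)
    then have cB: "card B \<le> K" using ks(1) by simp
    have "(\<Sum>k\<in>B. measure M (E k)) \<le> real (card B) * (\<delta> / (2 * real K))"
      using sum_bounded_above[of B "\<lambda>k. measure M (E k)" "\<delta> / (2 * real K)"] Ebound by simp
    also have "\<dots> \<le> real K * (\<delta> / (2 * real K))"
      by (rule mult_right_mono) (use cB delta in auto)
    also have "\<dots> = \<delta> / 2" using K1 by simp
    finally show ?thesis using delta by simp
  qed
  have "1 - \<delta> \<le> 1 - measure M (\<Union>k\<in>B. E k)"
  proof -
    have "E ` B \<subseteq> sets M" using EM unfolding B_def by auto
    from P.finite_measure_subadditive_finite[OF finB this] sumb show ?thesis by simp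
  qed
  also have "\<dots> = measure M (space M - (\<Union>k\<in>B. E k))" using P.prob_compl[OF UM] by simp
  also have "\<dots> \<le> measure M G" by (rule P.finite_measure_mono[OF sub GM])
  finally show ?thesis unfolding G_def .
qed

end
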